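(* Let $p$ be a prime and $\alpha\geq 1$, and let $\mathbb F_{p^\alpha}$ be the finite field with $p^\alpha$ elements. Let $A=\{a_1,\ldots,a_m\}$, $B=\{b_1,\ldots,b_n\}$ (with the $a_i$ pairwise distinct and the $b_j$ pairwise distinct) and $S$ be non-empty subsets of $\mathbb F_{p^\alpha}$ with $|S|<p$. Let $h=|S|$ and suppose $m\geq h+3$ and $m+n-h-2\leq p$. Then the set $$(A\oplus_S B)\setminus\{a_1+b_1,\ldots,a_1+b_n\}$$ contains $m-h-2$ pairwise distinct elements $$a_{i_1}+b_{j_1},\ a_{i_2}+b_{j_2},\ \ldots,\ a_{i_{m-h-2}}+b_{j_{m-h-2}}$$ (each with $a_{i_k}-b_{j_k}\notin S$) such that for each $1\leq k\leq m-h-2$, $$i_k\in\{2,3,\ldots,h+2,\ k+h+2\}.$$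
   Context: For subsets $A,B,S$ of an abelian group (here the additive group of $\mathbb F_{p^\alpha}$), $A\oplus_S B:=\{a+b:\ a\in A,\ b\in B,\ a-b\notin S\}$. *)

theory Defs
  imports Main "HOL-Computational_Algebra.Primes"
begin

definition restricted_sumset :: "'a::ab_group_add set \<Rightarrow> 'a set \<Rightarrow> 'a set \<Rightarrow> 'a set" where
  "restricted_sumset A B S = {a + b | a b. a \<in> A \<and> b \<in> B \<and> a - b \<notin> S}"

end

theory Submission
  imports Defs "HOL-Number_Theory.Residues" "HOL-Computational_Algebra.Polynomial"
begin


lemma charp:
  assumes "prime p" "card (UNIV :: 'F::{field,finite} set) = p ^ \<alpha>" "\<alpha> \<ge> 1"
  shows "CHAR('F) = p"
proof -
  have "CHAR('F) > 0" by (simp add: finite_imp_CHAR_pos)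
  then have pc: "prime CHAR('F)" using prime_CHAR_semidom by blast
  have "CHAR('F) dvd p ^ \<alpha>" using CHAR_dvd_CARD[where 'a='F] assms(2) by simp
  then have "CHAR('F) dvd p" using pc prime_dvd_power by blast
  then show ?thesis using pc assms(1) by (simp add: primes_dvd_imp_eq)
qed

lemma coeff_mult_le:
  fixes p q :: "'a::idom poly"
  assumes "degree p \<le> m" "degree q \<le> k"
  shows "coeff (p * q) (m + k) = coeff p m * coeff q k"
proof (cases "degree p = m \<and> degree q = k")
  case True then show ?thesis using coeff_mult_degree_sum[of p q] by simp
next
  case False
  then have lt: "degree p < m \<or> degree q < k" using assms by auto
  have "degree (p*q) < m + k" using degree_mult_le[of p q] lt assms
    by (metis add_le_less_mono add_less_le_mono degree_0 le_less_trans mult_poly_0_left mult_poly_0_right zero_less_iff_neq_zero add_gr_0 le_neq_implies_less)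
  then have "coeff (p*q) (m+k) = 0" by (simp add: coeff_eq_0)
  moreover have "coeff p m * coeff q k = 0" using lt by (auto simp: coeff_eq_0)
  ultimately show ?thesis by simp
qed

definition wt :: "'a::field set \<Rightarrow> 'a \<Rightarrow> 'a" where
  "wt A a = inverse (\<Prod>a'\<in>A-{a}. a - a')"

lemma interp:
  fixes A :: "'a::field set"
  assumes fin: "finite A" and i: "i < card A"
  shows "(\<Sum>a\<in>A. wt A a * a^i) = (if i = card A - 1 then 1 else 0)"
proof -
  define pa where "pa a = (\<Prod>a'\<in>A-{a}. [:-a',1:])" for a
  define L where "L = (\<Sum>a\<in>A. smult (wt A a * a^i) (pa a))"
  have degpa: "degree (pa a) = card A - 1" and lcpa: "coeff (pa a) (card A - 1) = 1" if "a \<in> A" for a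
  proof -
    have "degree (pa a) = (\<Sum>a'\<in>A-{a}. degree [:-a',1:])" unfolding pa_def
      by (rule degree_prod_eq_sum_degree) auto
    also have "\<dots> = card A - 1" using that fin by simp
    finally show 1: "degree (pa a) = card A - 1" .
    have "lead_coeff (pa a) = 1" unfolding pa_def lead_coeff_prod by simp
    then show "coeff (pa a) (card A - 1) = 1" using 1 by simp
  qed
  have poly_pa: "poly (pa a) x = (\<Prod>a'\<in>A-{a}. x - a')" for a x
    unfolding pa_def poly_prod by simp
  have degL: "degree L \<le> card A - 1" unfolding L_def
    by (rule degree_sum_le[OF fin]) (metis degpa degree_smult_le order_trans order_refl)
  have "poly L x = x^i" if x: "x \<in> A" for x
  proof -
    have "poly L x = (\<Sum>a\<in>A. wt A a * a^i * poly (pa a) x)" unfolding L_def poly_sum by simp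
    also have "\<dots> = wt A x * x^i * poly (pa x) x"
    proof (rule sum.remove[OF fin x, THEN trans], rule trans[OF _ add_0_right], rule arg_cong[where f="\<lambda>y. _ + y"])
      show "(\<Sum>a\<in>A - {x}. wt A a * a ^ i * poly (pa a) x) = 0"
        using fin x by (intro sum.neutral) (auto simp: poly_pa prod_zero_iff)
    qed
    also have "\<dots> = x^i" using fin
      by (simp add: wt_def poly_pa prod_zero_iff)
    finally show ?thesis .
  qed
  then have "L = monom 1 i"
    by (intro poly_eqI_degree[of A]) (use degL i in \<open>auto simp: poly_monom degree_monom_eq\<close>)
  then have "coeff L (card A - 1) = (if i = card A - 1 then 1 else 0)" by simp
  moreover have "coeff L (card A - 1) = (\<Sum>a\<in>A. wt A a * a^i)"
    unfolding L_def coeff_sum coeff_smult by (intro sum.cong refl) (use lcpa in auto)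
  ultimately show ?thesis by simp
qed

lemma poly_le_sum:
  fixes p :: "'a::comm_semiring_1 poly"
  assumes "degree p \<le> n"
  shows "poly p x = (\<Sum>i\<le>n. coeff p i * x^i)"
proof -
  have "poly p x = (\<Sum>i\<le>degree p. coeff p i * x^i)" by (rule poly_altdef)
  also have "\<dots> = (\<Sum>i\<le>n. coeff p i * x^i)"
    by (rule sum.mono_neutral_left) (use assms in \<open>auto simp: coeff_eq_0\<close>)
  finally show ?thesis .
qed

definition cc :: "'a::zero poly poly \<Rightarrow> nat \<Rightarrow> nat \<Rightarrow> 'a" where
  "cc P i j = coeff (coeff P j) i"

definition ev :: "'a::comm_ring_1 poly poly \<Rightarrow> 'a \<Rightarrow> 'a \<Rightarrow> 'a" where
  "ev P a b = poly (poly P [:b:]) a"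

lemma ev_expand:
  fixes P :: "'a::comm_ring_1 poly poly"
  assumes dl: "\<And>i j. cc P i j \<noteq> 0 \<Longrightarrow> i + j \<le> K"
  shows "ev P a b = (\<Sum>j\<le>K. \<Sum>i\<le>K. cc P i j * a^i * b^j)"
proof -
  have dj: "degree (coeff P j) \<le> K" for j
  proof (rule degree_le, intro allI impI)
    fix i assume "K < i" then show "coeff (coeff P j) i = 0" using dl[of i j] by (auto simp: cc_def)
  qed
  have dP: "degree P \<le> K"
  proof (rule degree_le, intro allI impI)
    fix j assume "K < j"
    then have "coeff (coeff P j) i = 0" for i using dl[of i j] by (auto simp: cc_def)
    then show "coeff P j = 0" by (simp add: poly_eq_iff)
  qed
  have "poly P [:b:] = (\<Sum>j\<le>K. coeff P j * [:b:]^j)" by (rule poly_le_sum[OF dP])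
  then have "ev P a b = (\<Sum>j\<le>K. poly (coeff P j) a * b^j)"
    by (simp add: ev_def poly_sum poly_power)
  also have "\<dots> = (\<Sum>j\<le>K. \<Sum>i\<le>K. cc P i j * a^i * b^j)"
    by (intro sum.cong refl) (simp add: poly_le_sum[OF dj] sum_distrib_right cc_def)
  finally show ?thesis .
qed

lemma CN:
  fixes P :: "'a::field poly poly"
  assumes finA: "finite A0" and finB: "finite B0"
    and cA: "card A0 = Suc t1" and cB: "card B0 = Suc t2"
    and dl: "\<And>i j. cc P i j \<noteq> 0 \<Longrightarrow> i + j \<le> t1 + t2"
    and van: "\<And>a b. a \<in> A0 \<Longrightarrow> b \<in> B0 \<Longrightarrow> ev P a b = 0"
  shows "cc P t1 t2 = 0"
proof -
  define K where "K = t1 + t2"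
  define SA where "SA i = (\<Sum>a\<in>A0. wt A0 a * a^i)" for i
  define SB where "SB j = (\<Sum>b\<in>B0. wt B0 b * b^j)" for j
  have SA: "i \<le> t1 \<Longrightarrow> SA i = (if i = t1 then 1 else 0)" for i
    unfolding SA_def using interp[OF finA, of i] cA by simp
  have SB: "j \<le> t2 \<Longrightarrow> SB j = (if j = t2 then 1 else 0)" for j
    unfolding SB_def using interp[OF finB, of j] cB by simp
  have "0 = (\<Sum>a\<in>A0. \<Sum>b\<in>B0. wt A0 a * wt B0 b * ev P a b)"
    using van by simp
  also have "\<dots> = (\<Sum>a\<in>A0. \<Sum>b\<in>B0. \<Sum>j\<le>K. \<Sum>i\<le>K. cc P i j * ((wt A0 a * a^i) * (wt B0 b * b^j)))"
  proof -
    have ex: "ev P a b = (\<Sum>j\<le>K. \<Sum>i\<le>K. cc P i j * a^i * b^j)" for a b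
      using ev_expand[of P K a b] dl unfolding K_def by blast
    show ?thesis unfolding ex by (simp add: sum_distrib_left mult_ac)
  qed
  also have "\<dots> = (\<Sum>j\<le>K. \<Sum>i\<le>K. cc P i j * (SA i * SB j))"
  proof -
    have sw: "(\<Sum>a\<in>A0. \<Sum>b\<in>B0. \<Sum>j\<le>K. \<Sum>i\<le>K. F a b j i) = (\<Sum>j\<le>K. \<Sum>i\<le>K. \<Sum>a\<in>A0. \<Sum>b\<in>B0. F a b j i)" for F :: "'a \<Rightarrow> 'a \<Rightarrow> nat \<Rightarrow> nat \<Rightarrow> 'a"
    proof -
      have "(\<Sum>a\<in>A0. \<Sum>b\<in>B0. \<Sum>j\<le>K. \<Sum>i\<le>K. F a b j i) = (\<Sum>a\<in>A0. \<Sum>j\<le>K. \<Sum>b\<in>B0. \<Sum>i\<le>K. F a b j i)"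
        by (rule sum.cong[OF refl], rule sum.swap)
      also have "\<dots> = (\<Sum>a\<in>A0. \<Sum>j\<le>K. \<Sum>i\<le>K. \<Sum>b\<in>B0. F a b j i)"
        by (rule sum.cong[OF refl], rule sum.cong[OF refl], rule sum.swap)
      also have "\<dots> = (\<Sum>j\<le>K. \<Sum>a\<in>A0. \<Sum>i\<le>K. \<Sum>b\<in>B0. F a b j i)"
        by (rule sum.swap)
      also have "\<dots> = (\<Sum>j\<le>K. \<Sum>i\<le>K. \<Sum>a\<in>A0. \<Sum>b\<in>B0. F a b j i)"
        by (rule sum.cong[OF refl], rule sum.swap)
      finally show ?thesis .
    qed
    show ?thesis unfolding sw SA_def SB_def
      by (intro sum.cong refl) (simp add: sum_distrib_left sum_distrib_right sum_product, rule sum.swap)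
  qed
  also have "\<dots> = (\<Sum>j\<le>K. \<Sum>i\<le>K. (if i = t1 \<and> j = t2 then cc P i j else 0))"
  proof (intro sum.cong refl)
    fix i j assume "i \<in> {..K}" "j \<in> {..K}"
    show "cc P i j * (SA i * SB j) = (if i = t1 \<and> j = t2 then cc P i j else 0)"
    proof (cases "cc P i j = 0")
      case False
      then have ij: "i + j \<le> t1 + t2" using dl by blast
      show ?thesis
      proof (cases "i \<le> t1 \<and> j \<le> t2")
        case True then show ?thesis using SA SB by auto
      next
        case F: False
        then have "(i \<le> t1 \<and> SA i = 0) \<or> (j \<le> t2 \<and> SB j = 0)" using ij SA SB by auto
        then show ?thesis using F by auto
      qed
    qed auto
  qed
  also have "\<dots> = (\<Sum>j\<le>K. if j = t2 then cc P t1 t2 else 0)"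
    by (intro sum.cong refl) (auto simp: K_def)
  also have "\<dots> = cc P t1 t2" unfolding K_def by simp
  finally show ?thesis by simp
qed

lemma map_poly_hom_add:
  assumes "f 0 = 0" "\<And>a b. f (a + b) = f a + f b"
  shows "map_poly f (p + q) = map_poly f p + map_poly f q"
  by (intro poly_eqI) (simp add: assms coeff_map_poly)

lemma map_poly_hom_mult:
  fixes f :: "'a::comm_ring_1 \<Rightarrow> 'b::comm_ring_1"
  assumes f0: "f 0 = 0" and fa: "\<And>a b. f (a + b) = f a + f b" and fm: "\<And>a b. f (a * b) = f a * f b"
  shows "map_poly f (p * q) = map_poly f p * map_poly f q"
proof (induction p)
  case 0 then show ?case by simp
next
  case (pCons a p)
  have "map_poly f (pCons a p * q) = map_poly f (smult a q) + map_poly f (pCons 0 (p * q))"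
    by (simp add: map_poly_hom_add[OF f0 fa])
  also have "\<dots> = smult (f a) (map_poly f q) + pCons 0 (map_poly f p * map_poly f q)"
    by (simp add: map_poly_smult[OF f0 fm] map_poly_pCons[where f=f, OF f0] f0 pCons.IH)
  also have "\<dots> = map_poly f (pCons a p) * map_poly f q"
    by (simp add: map_poly_pCons[where f=f, OF f0])
  finally show ?case .
qed

definition TY :: "'a::comm_ring_1 poly poly" where "TY = [:0, [:0,1:]:]"
definition psi :: "'a::comm_ring_1 poly \<Rightarrow> 'a poly poly" where
  "psi q = poly (map_poly (\<lambda>a. [:[:a:]:]) q) TY"
definition sig :: "'a::comm_ring_1 poly poly \<Rightarrow> 'a poly poly" where
  "sig P = poly (map_poly psi P) [:0,1:]"

lemma psi_add: "psi (p + q) = psi p + psi q"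
  unfolding psi_def by (subst map_poly_hom_add) auto
lemma psi_mult: "psi (p * q) = psi p * psi q"
  unfolding psi_def by (subst map_poly_hom_mult) auto
lemma psi_0 [simp]: "psi 0 = 0" unfolding psi_def by simp
lemma psi_const [simp]: "psi [:c:] = [:[:c:]:]" unfolding psi_def by (simp add: map_poly_pCons)
lemma psi_pCons: "psi (pCons c q) = [:[:c:]:] + TY * psi q"
  unfolding psi_def by (simp add: map_poly_pCons)

lemma sig_add: "sig (P + Q) = sig P + sig Q"
  unfolding sig_def by (subst map_poly_hom_add) (auto simp: psi_add)
lemma sig_mult: "sig (P * Q) = sig P * sig Q"
  unfolding sig_def by (subst map_poly_hom_mult) (auto simp: psi_add psi_mult)
lemma sig_0 [simp]: "sig 0 = 0" unfolding sig_def by simp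
lemma sig_pCons: "sig (pCons q P) = psi q + [:0,1:] * sig P"
  unfolding sig_def by (simp add: map_poly_pCons)
lemma sig_1 [simp]: "sig 1 = 1"
  unfolding one_pCons sig_pCons one_poly_def[symmetric] by (simp add: one_pCons)
lemma sig_uminus: "sig (- P) = - sig P"
  using sig_add[of P "-P"] by (simp add: add_eq_0_iff)
lemma sig_diff: "sig (P - Q) = sig P - sig Q"
  using sig_add[of P "-Q"] sig_uminus[of Q] by simp
lemma sig_prod: "sig (\<Prod>x\<in>A. f x) = (\<Prod>x\<in>A. sig (f x))"
  by (induction A rule: infinite_finite_induct) (auto simp: sig_mult)
lemma sig_sum: "sig (\<Sum>x\<in>A. f x) = (\<Sum>x\<in>A. sig (f x))"
  by (induction A rule: infinite_finite_induct) (auto simp: sig_add)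
lemma sig_power: "sig (P ^ k) = sig P ^ k"
  by (induction k) (auto simp: sig_mult)

lemma coeff_psi: "coeff (coeff (psi q) k) i = (if i = k then coeff q i else 0)"
proof (induction q arbitrary: k i)
  case 0 then show ?case by simp
next
  case (pCons c q)
  have "TY * psi q = pCons 0 (smult [:0,1:] (psi q))" unfolding TY_def by simp
  then show ?case using pCons.IH
    by (cases k; cases i) (auto simp: psi_pCons)
qed

lemma coeff_sig: "coeff (coeff (sig P) k) i = (if i \<le> k then cc P i (k - i) else 0)"
proof (induction P arbitrary: k i)
  case 0 then show ?case by (simp add: cc_def)
next
  case (pCons q P)
  show ?case using pCons.IH
    by (auto simp: sig_pCons coeff_psi coeff_pCons' cc_def)
qed

lemma CN_sig:
  fixes P :: "'a::field poly poly"
  assumes "finite A0" "finite B0" "card A0 = Suc t1" "card B0 = Suc t2"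
    and deg: "degree (sig P) \<le> t1 + t2"
    and "\<And>a b. a \<in> A0 \<Longrightarrow> b \<in> B0 \<Longrightarrow> ev P a b = 0"
  shows "coeff (coeff (sig P) (t1 + t2)) t1 = 0"
proof -
  have "cc P i j = 0" if "t1 + t2 < i + j" for i j
  proof -
    have "coeff (sig P) (i + j) = 0" using deg that by (simp add: coeff_eq_0)
    then show ?thesis using coeff_sig[of P "i+j" i] by simp
  qed
  then have "cc P t1 t2 = 0" using CN[OF assms(1-4)] assms(6) by (meson not_le)
  then show ?thesis using coeff_sig[of P "t1+t2" t1] by simp
qed

definition XX :: "'a::comm_ring_1 poly poly" where "XX = [:[:0,1:]:]"
definition YY :: "'a::comm_ring_1 poly poly" where "YY = [:0,1:]"
definition CC :: "'a::comm_ring_1 \<Rightarrow> 'a poly poly" where "CC c = [:[:c:]:]"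

lemma sig_XX [simp]: "sig XX = TY"
proof -
  have "psi [:0,1:] = (TY :: 'a poly poly)" using psi_pCons[of 0 "1::'a poly"]
    by (simp add: one_pCons[symmetric] psi_const[of 1, simplified one_pCons[symmetric]])
  then show ?thesis unfolding XX_def sig_def by (simp add: map_poly_pCons)
qed
lemma sig_YY [simp]: "sig YY = [:0,1:]"
  unfolding YY_def using sig_pCons[of 0 1] by (simp add: one_pCons[symmetric])
lemma sig_CC [simp]: "sig (CC c) = CC c"
  unfolding CC_def sig_def by (simp add: map_poly_pCons)

lemma ev_mult [simp]: "ev (P * Q) a b = ev P a b * ev Q a b" unfolding ev_def by simp
lemma ev_add [simp]: "ev (P + Q) a b = ev P a b + ev Q a b" unfolding ev_def by simp
lemma ev_diff [simp]: "ev (P - Q) a b = ev P a b - ev Q a b" unfolding ev_def by simp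
lemma ev_prod: "ev (\<Prod>x\<in>A. f x) a b = (\<Prod>x\<in>A. ev (f x) a b)" unfolding ev_def by (simp add: poly_prod)
lemma ev_sum: "ev (\<Sum>x\<in>A. f x) a b = (\<Sum>x\<in>A. ev (f x) a b)" unfolding ev_def by (simp add: poly_sum)
lemma ev_power [simp]: "ev (P ^ k) a b = ev P a b ^ k" unfolding ev_def by (simp add: poly_power)
lemma ev_XX [simp]: "ev XX a b = a" unfolding ev_def XX_def by simp
lemma ev_YY [simp]: "ev YY a b = b" unfolding ev_def YY_def by simp
lemma ev_CC [simp]: "ev (CC c) a b = c" unfolding ev_def CC_def by simp

lemma coeff_prod_le:
  fixes f :: "'b \<Rightarrow> 'a::idom poly"
  assumes "finite A" "\<And>x. x \<in> A \<Longrightarrow> degree (f x) \<le> d x"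
  shows "degree (prod f A) \<le> sum d A \<and> coeff (prod f A) (sum d A) = (\<Prod>x\<in>A. coeff (f x) (d x))"
  using assms
proof (induction A rule: finite_induct)
  case empty then show ?case by simp
next
  case (insert x F)
  have d1: "degree (f x) \<le> d x" using insert by simp
  have d2: "degree (prod f F) \<le> sum d F" using insert by simp
  have "degree (f x * prod f F) \<le> d x + sum d F"
    using degree_mult_le[of "f x" "prod f F"] d1 d2 by linarith
  moreover have "coeff (f x * prod f F) (d x + sum d F) = coeff (f x) (d x) * coeff (prod f F) (sum d F)"
    by (rule coeff_mult_le[OF d1 d2])
  ultimately show ?case using insert by simp
qed

lemma coeff_power_le:
  fixes p :: "'a::idom poly"
  assumes "degree p \<le> d"
  shows "degree (p ^ k) \<le> k * d \<and> coeff (p ^ k) (k * d) = coeff p d ^ k"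
  using coeff_prod_le[of "{..<k}" "\<lambda>_. p" "\<lambda>_. d"] assms by (simp add: mult.commute)

definition ZZ :: "'a::comm_ring_1 \<Rightarrow> 'a poly poly" where "ZZ a1 = XX + YY - CC a1"
definition GG :: "'a::comm_ring_1 poly \<Rightarrow> 'a \<Rightarrow> 'a poly poly" where
  "GG g a1 = (\<Sum>k\<le>degree g. CC (coeff g k) * (\<Sum>i<k. YY^(k - Suc i) * ZZ a1 ^ i))"

lemma ev_GG: "ev (GG g a1) a b * (a - a1) = poly g (a + b - a1) - poly g b"
proof -
  define z where "z = a + b - a1"
  have zb: "z - b = a - a1" unfolding z_def by simp
  have "ev (GG g a1) a b = (\<Sum>k\<le>degree g. coeff g k * (\<Sum>i<k. b^(k - Suc i) * z^i))"
    unfolding GG_def ev_sum z_def ZZ_def by (simp add: ev_sum)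
  then have "ev (GG g a1) a b * (a - a1) = (\<Sum>k\<le>degree g. coeff g k * ((z - b) * (\<Sum>i<k. b^(k - Suc i) * z^i)))"
    unfolding zb by (simp add: sum_distrib_right sum_distrib_left mult_ac)
  also have "\<dots> = (\<Sum>k\<le>degree g. coeff g k * (z^k - b^k))"
    by (simp add: power_diff_sumr2)
  also have "\<dots> = poly g z - poly g b"
    by (simp add: poly_altdef right_diff_distrib sum_subtractf)
  finally show ?thesis unfolding z_def .
qed

lemma sig_ZZ: "sig (ZZ a1) = [:[:-a1:], [:1,1:]:]"
  unfolding ZZ_def sig_diff sig_add sig_XX sig_YY sig_CC by (simp add: TY_def CC_def one_pCons)

lemma sig_GG:
  fixes g :: "'a::field poly"
  assumes n: "degree g = n" "n \<ge> 1" and lc: "lead_coeff g = 1"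
  shows "degree (sig (GG g a1)) \<le> n - 1 \<and> coeff (sig (GG g a1)) (n - 1) = (\<Sum>i<n. [:1,1:]^i)"
proof -
  define sZ where "sZ = sig (ZZ a1)"
  have dZ: "degree sZ \<le> 1" and cZ: "coeff sZ 1 = [:1,1:]" unfolding sZ_def sig_ZZ by auto
  define T where "T k = (\<Sum>i<k. [:0,1:]^(k - Suc i) * sZ ^ i)" for k :: nat
  have sG: "sig (GG g a1) = (\<Sum>k\<le>n. CC (coeff g k) * T k)"
    unfolding GG_def sig_sum sig_mult T_def sZ_def n(1) by (simp add: sig_sum sig_mult sig_power)
  have trm: "degree ([:0,1:]^(k - Suc i) * sZ ^ i) \<le> k - 1 \<and> coeff ([:0,1:]^(k - Suc i) * sZ ^ i) (k - 1) = [:1,1:]^i"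
    if "i < k" for i k
  proof -
    have a: "degree ([:0,1:]^(k - Suc i) :: 'a poly poly) \<le> (k - Suc i) * 1 \<and> coeff ([:0,1:]^(k - Suc i) :: 'a poly poly) ((k - Suc i) * 1) = 1"
      using coeff_power_le[of "[:0,1:] :: 'a poly poly" 1 "k - Suc i"] by simp
    have b: "degree (sZ ^ i) \<le> i * 1 \<and> coeff (sZ ^ i) (i * 1) = [:1,1:]^i"
      using coeff_power_le[OF dZ, of i] cZ by simp
    have e: "k - 1 = (k - Suc i) * 1 + i * 1" using that by simp
    show ?thesis unfolding e using degree_mult_le[of "[:0,1:]^(k - Suc i) :: 'a poly poly" "sZ^i"] a b
      coeff_mult_le[of "[:0,1:]^(k - Suc i) :: 'a poly poly" "(k - Suc i) * 1" "sZ^i" "i * 1"] by simp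
  qed
  have dT: "degree (T k) \<le> k - 1" for k
    unfolding T_def by (rule degree_sum_le) (use trm in auto)
  have cT: "coeff (T n) (n - 1) = (\<Sum>i<n. [:1,1:]^i)"
    unfolding T_def coeff_sum by (intro sum.cong refl) (use trm in auto)
  have CCm: "CC c * Q = smult [:c:] Q" for c and Q :: "'a poly poly" unfolding CC_def by simp
  have dterm: "degree (CC (coeff g k) * T k) \<le> n - 1" if "k \<le> n" for k
    unfolding CCm using degree_smult_le[of "[:coeff g k:]" "T k"] dT[of k] that by linarith
  have "degree (sig (GG g a1)) \<le> n - 1" unfolding sG by (rule degree_sum_le) (use dterm in auto)
  moreover have "coeff (sig (GG g a1)) (n - 1) = (\<Sum>k\<le>n. if k = n then (\<Sum>i<n. [:1,1:]^i) else 0)"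
    unfolding sG coeff_sum
  proof (intro sum.cong refl)
    fix k assume k: "k \<in> {..n}"
    show "coeff (CC (coeff g k) * T k) (n - 1) = (if k = n then \<Sum>i<n. [:1, 1:] ^ i else 0)"
    proof (cases "k = n")
      case True then show ?thesis using lc n cT unfolding CCm by simp
    next
      case False
      then have "k - 1 < n - 1 \<or> k = 0" using k n by auto
      then have "coeff (T k) (n - 1) = 0"
        using dT[of k] by (auto simp: coeff_eq_0 T_def)
      then show ?thesis using False unfolding CCm by simp
    qed
  qed
  ultimately show ?thesis by simp
qed



lemma rec_g:
  fixes h E w :: nat
  assumes h1: "h \<ge> 1" and E1: "E \<ge> 1"
  defines "g \<equiv> [:-1,1:]^h * [:1,1:]^E :: 'a::field poly"
  shows "of_nat (w+2) * coeff g (w+2) = (of_nat w - of_nat (h+E)) * coeff g w - (of_nat h - of_nat E) * coeff g (w+1)"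
proof -
  define u :: "'a poly" where "u = [:-1,1:]"
  define v :: "'a poly" where "v = [:1,1:]"
  have gd: "g = u^h * v^E" unfolding g_def u_def v_def ..
  have pu: "pderiv u = 1" unfolding u_def by (simp add: pderiv_pCons)
  have pv: "pderiv v = 1" unfolding v_def by (simp add: pderiv_pCons)
  have uh: "u * u^(h-1) = u^h" using h1 by (simp add: power_eq_if)
  have vE: "v * v^(E-1) = v^E" using E1 by (simp add: power_eq_if)
  have "pderiv g = u^h * smult (of_nat E) (v^(E-1)) + v^E * smult (of_nat h) (u^(h-1))"
    unfolding gd pderiv_mult pderiv_power pu pv by simp
  then have "(u * v) * pderiv g = smult (of_nat E) (u * (u^h * (v * v^(E-1)))) + smult (of_nat h) (v * (v^E * (u * u^(h-1))))"
    by (simp add: algebra_simps)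
  also have "\<dots> = (smult (of_nat E) u + smult (of_nat h) v) * g"
    unfolding uh vE gd by (simp add: algebra_simps)
  finally have id: "(u * v) * pderiv g = (smult (of_nat E) u + smult (of_nat h) v) * g" .
  have uv: "u * v = monom 1 2 - 1" unfolding u_def v_def by (simp add: monom_altdef numeral_2_eq_2 one_pCons)
  have l: "coeff ((u * v) * pderiv g) (w+1) = of_nat w * coeff g w - of_nat (w+2) * coeff g (w+2)"
    unfolding uv left_diff_distrib coeff_diff coeff_monom_mult
    by (cases w) (simp_all add: coeff_pderiv algebra_simps)
  have r: "coeff ((smult (of_nat E) u + smult (of_nat h) v) * g) (w+1) = (of_nat h - of_nat E) * coeff g (w+1) + (of_nat h + of_nat E) * coeff g w"
    unfolding u_def v_def by (simp add: algebra_simps)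
  have "of_nat w * coeff g w - of_nat (w+2) * coeff g (w+2) = (of_nat h - of_nat E) * coeff g (w+1) + (of_nat h + of_nat E) * coeff g w"
    using l r id by metis
  then show ?thesis by (simp add: algebra_simps)
qed

lemma coef_nz:
  fixes p h r n :: nat
  assumes ch: "CHAR('a::field) = p" and pp: "prime p" and h1: "1 \<le> h" and hp: "h < p"
    and hr: "h + 2 \<le> r" and n1: "1 \<le> n" and np: "n < p" and rn: "r + n \<le> p + h + 1"
  shows "coeff ([:-1,1:]^h * [:1,1:]^(r+n-h-2) :: 'a poly) (r-1) \<noteq> 0 \<or>
         (2 \<le> n \<and> coeff ([:-1,1:]^h * [:1,1:]^(r+n-h-2) :: 'a poly) r \<noteq> 0)"
proof -
  define E where "E = r+n-h-2"
  define D where "D = r + n - 2"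
  define g :: "'a poly" where "g = [:-1,1:]^h * [:1,1:]^E"
  have DhE: "D = h + E" unfolding D_def E_def using hr by simp
  have E1: "E \<ge> 1" unfolding E_def using hr n1 by simp
  have Ep: "E < p" unfolding E_def using rn np hr by simp
  have degg: "degree g = D" unfolding g_def DhE
    by (simp add: degree_mult_eq degree_linear_power)
  have lcg: "coeff g D = 1"
  proof -
    have "lead_coeff g = 1" unfolding g_def by (simp add: lead_coeff_mult lead_coeff_power)
    then show ?thesis using degg by simp
  qed
  have g0: "g \<noteq> 0" using lcg by auto
  have nz: "of_nat k \<noteq> (0::'a)" if "0 < k" "k < p" for k
  proof
    assume "of_nat k = (0::'a)"
    then have "p dvd k" using of_nat_eq_0_iff_char_dvd[where 'a='a] ch by simp
    then show False using that by (simp add: nat_dvd_not_less)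
  qed
  have rec: "of_nat (w+2) * coeff g (w+2) = (of_nat w - of_nat D) * coeff g w - (of_nat h - of_nat E) * coeff g (w+1)" for w
    using rec_g[OF h1 E1, of w, where 'a='a] unfolding g_def DhE by simp
  show ?thesis unfolding E_def[symmetric] g_def[symmetric]
  proof (rule ccontr)
    assume nc: "\<not> (coeff g (r - 1) \<noteq> 0 \<or> (2 \<le> n \<and> coeff g r \<noteq> 0))"
    then have z1: "coeff g (r-1) = 0" by simp
    have n2: "2 \<le> n"
    proof (rule ccontr)
      assume "\<not> 2 \<le> n"
      then have "n = 1" using n1 by simp
      then have "D = r - 1" unfolding D_def by simp
      then show False using z1 lcg by simp
    qed
    then have z2: "coeff g r = 0" using nc by simp
    have rD: "r \<le> D" unfolding D_def using n2 by simp
    have up: "r + d \<le> D \<longrightarrow> (\<forall>k. r+1 \<le> k \<longrightarrow> k \<le> r + d \<longrightarrow> \<not> p dvd k) \<longrightarrow> coeff g (r - 1 + d) = 0 \<and> coeff g (r + d) = 0" for d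
    proof (induction d)
      case 0 then show ?case using z1 z2 by simp
    next
      case (Suc d)
      show ?case
      proof (intro impI)
        assume a1: "r + Suc d \<le> D" and a2: "\<forall>k. r + 1 \<le> k \<longrightarrow> k \<le> r + Suc d \<longrightarrow> \<not> p dvd k"
        then have ih: "coeff g (r - 1 + d) = 0" "coeff g (r + d) = 0" using Suc.IH by auto
        have "of_nat (r - 1 + d + 2) * coeff g (r - 1 + d + 2) = 0"
          using rec[of "r - 1 + d"] ih hr by (simp add: add.commute add.left_commute)
        moreover have "r - 1 + d + 2 = r + Suc d" using hr by simp
        moreover have "of_nat (r + Suc d) \<noteq> (0::'a)"
        proof
          assume "of_nat (r + Suc d) = (0::'a)"
          then have "p dvd r + Suc d" using of_nat_eq_0_iff_char_dvd[where 'a='a, of "r + Suc d"] ch by metis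
          then show False using a2 by auto
        qed
        ultimately have "coeff g (r + Suc d) = 0" by simp
        then show "coeff g (r - 1 + Suc d) = 0 \<and> coeff g (r + Suc d) = 0" using ih hr by simp
      qed
    qed
    show False
    proof (cases "\<exists>k. r+1 \<le> k \<and> k \<le> D \<and> p dvd k")
      case False
      then have "coeff g (r + (D - r)) = 0" using up[of "D - r"] rD by auto
      then show False using lcg rD by simp
    next
      case True
      then obtain k where k: "r+1 \<le> k" "k \<le> D" "p dvd k" by blast
      have D2p: "D < 2 * p" unfolding D_def using rn hp by simp
      have kp: "k = p"
      proof -
        obtain q where q: "k = p * q" using k(3) by blast
        have "q \<noteq> 0" using q k(1) by (cases q) auto
        moreover have "p * q < p * 2" using q k(2) D2p by linarith
        then have "q < 2" using prime_gt_0_nat[OF pp] by simp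
        ultimately show ?thesis using q by simp
      qed
      have p3: "p \<noteq> 2"
      proof
        assume "p = 2" then have "h = 1" using h1 hp by simp
        then show False using rn hr n2 \<open>p = 2\<close> by simp
      qed
      define w0 where "w0 = D + 1 - p"
      have w01: "1 \<le> w0" unfolding w0_def using k kp by simp
      have w0h: "w0 \<le> h" unfolding w0_def D_def using rn n2 by linarith
      have w0E: "w0 \<le> E" unfolding w0_def using DhE hp by simp
      have zU: "coeff g j = 0" if "r - 1 \<le> j" "j < p" for j
      proof (cases "j < r")
        case True then have "j = r - 1" using that by simp
        then show ?thesis using z1 by simp
      next
        case False
        have "r + (j - r) \<le> D" using that kp k by simp
        moreover have "\<forall>k. r+1 \<le> k \<longrightarrow> k \<le> r + (j - r) \<longrightarrow> \<not> p dvd k"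
        proof (intro allI impI)
          fix k assume "r+1 \<le> k" "k \<le> r + (j - r)"
          then have "0 < k" "k < p" using that False by auto
          then show "\<not> p dvd k" by (simp add: nat_dvd_not_less)
        qed
        ultimately show ?thesis using up[of "j - r"] False by simp
      qed
      have down: "d \<le> r - 1 - w0 \<longrightarrow> coeff g (r - d) = 0 \<and> coeff g (r - 1 - d) = 0" for d
      proof (induction d)
        case 0 then show ?case using z1 z2 by simp
      next
        case (Suc d)
        show ?case
        proof
          assume a: "Suc d \<le> r - 1 - w0"
          then have ih: "coeff g (r - d) = 0" "coeff g (r - 1 - d) = 0" using Suc.IH by auto
          define w where "w = r - 2 - d"
          have w2: "w + 2 = r - d" "w + 1 = r - 1 - d" unfolding w_def using a by auto
          have "(of_nat w - of_nat D) * coeff g w = (0::'a)"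
            using rec[of w] ih unfolding w2 by simp
          moreover have "(of_nat w - of_nat D :: 'a) \<noteq> 0"
          proof -
            have wD: "w \<le> D" unfolding w_def D_def by simp
            have "of_nat w - of_nat D = - (of_nat (D - w) :: 'a)" using wD by (simp add: of_nat_diff)
            moreover have "0 < D - w" "D - w < p" unfolding w_def using a w01 n2 unfolding w0_def D_def by auto
            ultimately show ?thesis using nz[of "D - w"] by (metis neg_equal_0_iff_equal)
          qed
          ultimately have cw: "coeff g w = 0" by simp
          have e1: "w = r - 1 - Suc d" unfolding w_def by arith
          have e2: "r - Suc d = r - 1 - d" by arith
          show "coeff g (r - Suc d) = 0 \<and> coeff g (r - 1 - Suc d) = 0"
            using cw ih(2) unfolding e1[symmetric] e2 by blast
        qed
      qed
      have zD: "coeff g j = 0" if "w0 \<le> j" "j \<le> r" for j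
      proof (cases "j = r")
        case True then show ?thesis using z2 by simp
      next
        case False
        then have "r - 1 - (r - 1 - j) = j" "r - 1 - j \<le> r - 1 - w0" using that by auto
        then show ?thesis using down[of "r - 1 - j"] by metis
      qed
      have zero: "coeff g j = 0" if "w0 \<le> j" "j < p" for j
        using zU zD that by (cases "j \<le> r") auto
      define L :: "'a poly" where "L = (\<Sum>j<w0. monom (coeff g j) j)"
      define H :: "'a poly" where "H = (\<Sum>j<w0. monom (coeff g (p + j)) j)"
      have cL: "coeff L j = (if j < w0 then coeff g j else 0)" for j
        unfolding L_def coeff_sum by (simp add: coeff_monom)
      have cH: "coeff H j = (if j < w0 then coeff g (p + j) else 0)" for j
        unfolding H_def coeff_sum by (simp add: coeff_monom)
      have gLH: "g = L + monom 1 p * H"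
      proof (rule poly_eqI)
        fix j
        show "coeff g j = coeff (L + monom 1 p * H) j"
        proof (cases "j < p")
          case True
          then show ?thesis using zero[of j] by (auto simp: cL coeff_monom_mult)
        next
          case False
          have "p + w0 = D + 1" unfolding w0_def using k kp by simp
          then have "j - p \<ge> w0 \<Longrightarrow> coeff g j = 0" using degg False by (intro coeff_eq_0) simp
          then show ?thesis using False w01 w0h hp by (auto simp: cL cH coeff_monom_mult)
        qed
      qed
      have degL: "degree (L + H) < w0" "degree (L - H) < w0"
      proof -
        have "degree L \<le> w0 - 1" unfolding L_def by (rule degree_sum_le) (auto intro: order_trans[OF degree_monom_le])
        moreover have "degree H \<le> w0 - 1" unfolding H_def by (rule degree_sum_le) (auto intro: order_trans[OF degree_monom_le])
        ultimately show "degree (L + H) < w0" "degree (L - H) < w0"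
          using degree_add_le_max[of L H] degree_diff_le_max[of L H] w01 by linarith+
      qed
      have chp: "prime CHAR('a poly)" using ch pp by simp
      have X: "[:0,1:] ^ p = (monom 1 p :: 'a poly)" by (simp add: monom_altdef)
      have p2: "2 < p" using prime_ge_2_nat[OF pp] p3 by linarith
      have op: "odd p" using prime_odd_nat[OF pp p2] .
      have up_: "[:-1,1:]^p = (monom 1 p - 1 :: 'a poly)"
      proof -
        have e: "[:-1,1:] = ([:0,1:] + (- 1) :: 'a poly)" by (simp add: one_pCons)
        have "([:0,1:] + (- 1) :: 'a poly)^p = [:0,1:]^p + (- 1)^p"
          by (rule freshmans_dream[OF chp]) (simp only: semiring_char_poly ch)
        moreover have "(- 1 :: 'a poly)^p = - 1" using op by (simp add: power_minus_odd)
        ultimately show ?thesis unfolding e X by simp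
      qed
      have vp_: "[:1,1:]^p = (monom 1 p + 1 :: 'a poly)"
      proof -
        have e: "[:1,1:] = ([:0,1:] + 1 :: 'a poly)" by (simp add: one_pCons)
        have "([:0,1:] + 1 :: 'a poly)^p = [:0,1:]^p + 1^p"
          by (rule freshmans_dream[OF chp]) (simp only: semiring_char_poly ch)
        then show ?thesis unfolding e X by simp
      qed
      have d1: "[:-1,1:]^h dvd (L + H)"
      proof -
        have "L + H = g - [:-1,1:]^p * H" unfolding gLH up_ by (simp add: left_diff_distrib)
        moreover have "[:-1,1:]^h dvd g" unfolding g_def by simp
        moreover have "[:-1,1:]^h dvd ([:-1,1:]^p * (H :: 'a poly))"
          using le_imp_power_dvd[of h p "[:-1,1:] :: 'a poly"] hp by (simp add: dvd_mult2)
        ultimately show ?thesis by (metis dvd_diff)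
      qed
      have d2: "[:1,1:]^E dvd (L - H)"
      proof -
        have "L - H = g - [:1,1:]^p * H" unfolding gLH vp_ by (simp add: distrib_right)
        moreover have "[:1,1:]^E dvd g" unfolding g_def by simp
        moreover have "[:1,1:]^E dvd ([:1,1:]^p * (H :: 'a poly))"
          using le_imp_power_dvd[of E p "[:1,1:] :: 'a poly"] Ep by (simp add: dvd_mult2)
        ultimately show ?thesis by (metis dvd_diff)
      qed
      have e1: "L + H = 0"
      proof (rule ccontr)
        assume "L + H \<noteq> 0"
        then have "degree ([:-1,1:]^h :: 'a poly) \<le> degree (L + H)" using d1 by (intro dvd_imp_degree) auto
        then show False using degL w0h by (simp add: degree_linear_power)
      qed
      have e2: "L - H = 0"
      proof (rule ccontr)
        assume "L - H \<noteq> 0"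
        then have "degree ([:1,1:]^E :: 'a poly) \<le> degree (L - H)" using d2 by (intro dvd_imp_degree) auto
        then show False using degL w0E by (simp add: degree_linear_power)
      qed
      have HH: "H + H = 0"
      proof -
        have "H + H = (L + H) - (L - H)" by (simp add: algebra_simps)
        then show ?thesis using e1 e2 by simp
      qed
      have two: "(2::'a) \<noteq> 0"
      proof -
        have "2 < p" using prime_ge_2_nat[OF pp] p3 by linarith
        then show ?thesis using nz[of 2] by simp
      qed
      have "H = 0"
      proof (rule poly_eqI)
        fix j
        have "coeff (H + H) j = coeff 0 j" by (simp only: HH)
        then have "coeff H j + coeff H j = 0" by (simp only: coeff_add coeff_0)
        then have "2 * coeff H j = 0" by (simp only: mult_2)
        then show "coeff H j = coeff 0 j" using two by simp
      qed
      then have "L = 0" using e1 by simp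
      then have "g = 0" using gLH \<open>H = 0\<close> by simp
      then show False using g0 by simp
    qed
  qed
qed



lemma sig_lin1: "sig (XX - YY - CC s) = [:[:-s:], [:-1,1:]:]"
  unfolding sig_diff sig_XX sig_YY sig_CC by (simp add: TY_def CC_def one_pCons)
lemma sig_lin2: "sig (XX + YY - CC s) = [:[:-s:], [:1,1:]:]"
  unfolding sig_diff sig_add sig_XX sig_YY sig_CC by (simp add: TY_def CC_def one_pCons)

lemma exists_superset_card:
  fixes V AJ :: "'a set"
  assumes "finite V" "card V \<le> c" "finite AJ" "c \<le> card AJ"
  shows "\<exists>V'. V \<subseteq> V' \<and> finite V' \<and> card V' = c"
proof (cases "finite (UNIV :: 'a set)")
  case True
  have "card AJ \<le> card (UNIV :: 'a set)" using True by (simp add: card_mono)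
  then have "c - card V \<le> card (UNIV - V)" using assms True by (simp add: card_Diff_subset)
  then obtain W where W: "W \<subseteq> UNIV - V" "card W = c - card V" by (meson obtain_subset_with_card_n)
  then have "finite W" using True rev_finite_subset by blast
  moreover have "card (V \<union> W) = c" using W assms \<open>finite W\<close> by (subst card_Un_disjoint) auto
  ultimately show ?thesis using W assms by (intro exI[of _ "V \<union> W"]) auto
next
  case False
  then have "infinite (UNIV - V)" using assms(1) by (simp add: Diff_infinite_finite)
  then obtain W where W: "W \<subseteq> UNIV - V" "finite W" "card W = c - card V"
    using infinite_arbitrarily_large by blast
  moreover have "card (V \<union> W) = c" using W assms by (subst card_Un_disjoint) auto
  ultimately show ?thesis using assms by (intro exI[of _ "V \<union> W"]) auto
qed

lemma KT:
  fixes AJ B S :: "'a::field set" and a1 :: 'a and p h r n :: nat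
  assumes ch: "CHAR('a) = p" and pp: "prime p"
    and fA: "finite AJ" and fB: "finite B" and fS: "finite S" and a1: "a1 \<notin> AJ"
    and cS: "card S = h" and h1: "1 \<le> h" and hp: "h < p"
    and cA: "card AJ = r" and hr: "h + 2 \<le> r"
    and cB: "card B = n" and n1: "1 \<le> n" and np: "n < p" and rn: "r + n \<le> p + h + 1"
  shows "r - h - 1 \<le> card {x + y | x y. x \<in> AJ \<and> y \<in> B \<and> x - y \<notin> S \<and> x + y - a1 \<notin> B}"
proof (rule ccontr)
  define V where "V = {x + y | x y. x \<in> AJ \<and> y \<in> B \<and> x - y \<notin> S \<and> x + y - a1 \<notin> B}"
  assume "\<not> r - h - 1 \<le> card {x + y | x y. x \<in> AJ \<and> y \<in> B \<and> x - y \<notin> S \<and> x + y - a1 \<notin> B}"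
  then have cV: "card V \<le> r - h - 2" unfolding V_def by linarith
  have fV: "finite V"
    by (rule rev_finite_subset[of "(\<lambda>(x,y). x + y) ` (AJ \<times> B)"]) (use fA fB in \<open>auto simp: V_def\<close>)
  define c where "c = r - h - 2"
  obtain V' where V': "V \<subseteq> V'" "finite V'" "card V' = c"
    using exists_superset_card[OF fV cV[folded c_def] fA] cA c_def by auto
  define gB :: "'a poly" where "gB = (\<Prod>b\<in>B. [:-b,1:])"
  have dgB: "degree gB = n" unfolding gB_def cB[symmetric]
    by (subst degree_prod_eq_sum_degree) auto
  have lgB: "lead_coeff gB = 1" unfolding gB_def lead_coeff_prod by simp
  have pgB: "poly gB z = 0 \<longleftrightarrow> z \<in> B" for z unfolding gB_def poly_prod using fB by simp
  define P where "P = (\<Prod>s\<in>S. XX - YY - CC s) * (\<Prod>e\<in>V'. XX + YY - CC e) * GG gB a1"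
  have van: "ev P a b = 0" if a: "a \<in> AJ" and b: "b \<in> B" for a b
  proof -
    have evP: "ev P a b = (\<Prod>s\<in>S. a - b - s) * (\<Prod>e\<in>V'. a + b - e) * ev (GG gB a1) a b"
      unfolding P_def by (simp add: ev_prod)
    show ?thesis
    proof (cases "a - b \<in> S")
      case True
      then have "(\<Prod>s\<in>S. a - b - s) = 0" using fS by (simp add: prod_zero_iff)
      then show ?thesis unfolding evP by simp
    next
      case nS: False
      show ?thesis
      proof (cases "a + b - a1 \<in> B")
        case True
        have "ev (GG gB a1) a b * (a - a1) = 0" unfolding ev_GG using pgB[of "a + b - a1"] pgB[of b] True b by simp
        moreover have "a - a1 \<noteq> 0" using a a1 by auto
        ultimately show ?thesis unfolding evP by simp
      next
        case False
        then have "a + b \<in> V'" using nS a b V'(1) unfolding V_def by blast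
        then have "(\<Prod>e\<in>V'. a + b - e) = 0" using V'(2) by (simp add: prod_zero_iff)
        then show ?thesis unfolding evP by simp
      qed
    qed
  qed
  define D where "D = h + c + (n - 1)"
  define T :: "'a poly" where "T = [:-1,1:]^h * [:1,1:]^c * (\<Sum>i<n. [:1,1:]^i)"
  have sigP: "degree (sig P) \<le> D \<and> coeff (sig P) D = T"
  proof -
    have f1: "degree (\<Prod>s\<in>S. sig (XX - YY - CC s)) \<le> h \<and> coeff (\<Prod>s\<in>S. sig (XX - YY - CC s)) h = [:-1,1:]^h"
      using coeff_prod_le[OF fS, of "\<lambda>s. sig (XX - YY - CC s)" "\<lambda>_. 1"] cS by (simp add: sig_lin1)
    have f2: "degree (\<Prod>e\<in>V'. sig (XX + YY - CC e)) \<le> c \<and> coeff (\<Prod>e\<in>V'. sig (XX + YY - CC e)) c = [:1,1:]^c"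
      using coeff_prod_le[OF V'(2), of "\<lambda>s. sig (XX + YY - CC s)" "\<lambda>_. 1"] V'(3) by (simp add: sig_lin2)
    have f3: "degree (sig (GG gB a1)) \<le> n - 1 \<and> coeff (sig (GG gB a1)) (n - 1) = (\<Sum>i<n. [:1,1:]^i)"
      by (rule sig_GG[OF dgB n1 lgB])
    have sp: "sig P = (\<Prod>s\<in>S. sig (XX - YY - CC s)) * (\<Prod>e\<in>V'. sig (XX + YY - CC e)) * sig (GG gB a1)"
      unfolding P_def sig_mult sig_prod ..
    have d12: "degree ((\<Prod>s\<in>S. sig (XX - YY - CC s)) * (\<Prod>e\<in>V'. sig (XX + YY - CC e))) \<le> h + c"
      using degree_mult_le f1 f2 by (meson add_le_mono order_trans)
    have c12: "coeff ((\<Prod>s\<in>S. sig (XX - YY - CC s)) * (\<Prod>e\<in>V'. sig (XX + YY - CC e))) (h + c) = [:-1,1:]^h * [:1,1:]^c"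
      using coeff_mult_le f1 f2 by metis
    show ?thesis unfolding sp D_def T_def
      using degree_mult_le[of "(\<Prod>s\<in>S. sig (XX - YY - CC s)) * (\<Prod>e\<in>V'. sig (XX + YY - CC e))" "sig (GG gB a1)"]
        d12 f3 coeff_mult_le[OF d12, of "sig (GG gB a1)" "n - 1"] c12 by simp
  qed
  have Dv: "D = (r - 2) + (n - 1)" unfolding D_def c_def using hr by simp
  obtain a0 where a0: "a0 \<in> AJ" using cA hr by fastforce
  have CN1: "coeff T (r - 2) = 0"
  proof -
    have "coeff (coeff (sig P) ((r - 2) + (n - 1))) (r - 2) = 0"
    proof (rule CN_sig[of "AJ - {a0}" B])
      show "card (AJ - {a0}) = Suc (r - 2)" using a0 fA cA hr by simp
      show "card B = Suc (n - 1)" using cB n1 by simp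
      show "degree (sig P) \<le> r - 2 + (n - 1)" using sigP Dv by simp
    qed (use fA fB van in auto)
    then show ?thesis using sigP Dv by simp
  qed
  have CN2: "coeff T (r - 1) = 0" if n2: "2 \<le> n"
  proof -
    obtain b0 where b0: "b0 \<in> B" using cB n1 by fastforce
    have eD: "(r - 1) + (n - 2) = D" using Dv n2 hr by simp
    have "coeff (coeff (sig P) ((r - 1) + (n - 2))) (r - 1) = 0"
    proof (rule CN_sig[of AJ "B - {b0}"])
      show "card AJ = Suc (r - 1)" using cA hr by simp
      show "card (B - {b0}) = Suc (n - 2)" using b0 fB cB n2 by simp
      show "degree (sig P) \<le> r - 1 + (n - 2)" using sigP unfolding eD by simp
    qed (use fA fB van in auto)
    then show ?thesis using sigP unfolding eD by simp
  qed
  define g :: "'a poly" where "g = [:-1,1:]^h * [:1,1:]^(r+n-h-2)"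
  define R :: "'a poly" where "R = [:-1,1:]^h * [:1,1:]^c"
  have geo: "[:0,1:] * (\<Sum>i<n. [:1,1:]^i) = [:1,1:]^n - (1 :: 'a poly)"
    using power_diff_1_eq[of "[:1,1:] :: 'a poly" n] by (simp add: one_pCons)
  have TgR: "pCons 0 T = g - R"
  proof -
    have "pCons 0 T = [:0,1:] * T" by simp
    also have "\<dots> = R * ([:0,1:] * (\<Sum>i<n. [:1,1:]^i))" unfolding T_def R_def by (simp add: mult_ac)
    also have "\<dots> = R * [:1,1:]^n - R" unfolding geo by (simp add: right_diff_distrib)
    also have "R * [:1,1:]^n = g" unfolding R_def g_def c_def using hr
      by (simp add: mult.assoc power_add[symmetric])
    finally show ?thesis .
  qed
  have dR: "degree R = r - 2" unfolding R_def c_def using hr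
    by (simp add: degree_mult_eq degree_linear_power)
  have cg: "coeff g (Suc k) = coeff T k" if "r - 2 \<le> k" for k
  proof -
    have "coeff R (Suc k) = 0" using dR that by (simp add: coeff_eq_0)
    then show ?thesis using arg_cong[OF TgR, of "\<lambda>q. coeff q (Suc k)"] by simp
  qed
  have g1: "coeff g (r - 1) = 0" using cg[of "r - 2"] CN1 hr by (simp add: Suc_diff_Suc numeral_2_eq_2)
  have g2: "2 \<le> n \<Longrightarrow> coeff g r = 0" using cg[of "r - 1"] CN2 hr by simp
  show False using coef_nz[OF ch pp h1 hp hr n1 np rn] g1 g2 unfolding g_def by blast
qed



lemma hall:
  fixes F :: "'i \<Rightarrow> 'b set" and I :: "'i set"
  assumes "finite I" "\<And>i. i \<in> I \<Longrightarrow> finite (F i)" "\<And>K. K \<subseteq> I \<Longrightarrow> card K \<le> card (\<Union>(F ` K))"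
  shows "\<exists>f. inj_on f I \<and> (\<forall>i\<in>I. f i \<in> F i)"
  using assms
proof (induction "card I" arbitrary: I F rule: less_induct)
  case less
  note fI = less.prems(1) and fF = less.prems(2) and hc = less.prems(3)
  show ?case
  proof (cases "I = {}")
    case True then show ?thesis by auto
  next
    case ne: False
    show ?thesis
    proof (cases "\<forall>K. K \<subseteq> I \<longrightarrow> K \<noteq> {} \<longrightarrow> K \<noteq> I \<longrightarrow> card K < card (\<Union>(F ` K))")
      case True
      obtain i0 where i0: "i0 \<in> I" using ne by blast
      have "card {i0} \<le> card (\<Union>(F ` {i0}))" using hc i0 by blast
      then have "F i0 \<noteq> {}" by auto
      then obtain x where x: "x \<in> F i0" by blast
      define I' where "I' = I - {i0}"
      define F' where "F' i = F i - {x}" for i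
      have "\<exists>f. inj_on f I' \<and> (\<forall>i\<in>I'. f i \<in> F' i)"
      proof (rule less.hyps)
        show "card I' < card I" unfolding I'_def using card_Diff1_less[OF fI i0] .
        show "finite I'" unfolding I'_def using fI by simp
        show "finite (F' i)" if "i \<in> I'" for i unfolding F'_def using fF that I'_def by simp
        show "card K \<le> card (\<Union>(F' ` K))" if K: "K \<subseteq> I'" for K
        proof (cases "K = {}")
          case True then show ?thesis by simp
        next
          case False
          have KI: "K \<subseteq> I" "K \<noteq> I" using K i0 unfolding I'_def by auto
          then have lt: "card K < card (\<Union>(F ` K))" using True False by blast
          have fU: "finite (\<Union>(F ` K))" using KI fF fI by (meson finite_UN_I rev_finite_subset subsetD)
          have "\<Union>(F' ` K) = \<Union>(F ` K) - {x}" unfolding F'_def by auto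
          then have "card (\<Union>(F' ` K)) \<ge> card (\<Union>(F ` K)) - 1" using fU
            by (metis card_Diff_singleton_if diff_le_self le_refl)
          then show ?thesis using lt by linarith
        qed
      qed
      then obtain f' where f': "inj_on f' I'" "\<forall>i\<in>I'. f' i \<in> F' i" by blast
      define f where "f = f'(i0 := x)"
      have "inj_on f I"
      proof -
        have "I = insert i0 I'" unfolding I'_def using i0 by auto
        moreover have "inj_on f I'" using f' unfolding f_def I'_def by (simp add: inj_on_def)
        moreover have "f i0 \<notin> f ` I'" using f' unfolding f_def F'_def I'_def by auto
        moreover have "i0 \<notin> I'" unfolding I'_def by simp
        ultimately show ?thesis by simp
      qed
      moreover have "\<forall>i\<in>I. f i \<in> F i" using f' x unfolding f_def F'_def I'_def by auto
      ultimately show ?thesis by blast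
    next
      case False
      then obtain K0 where K0: "K0 \<subseteq> I" "K0 \<noteq> {}" "K0 \<noteq> I" "\<not> card K0 < card (\<Union>(F ` K0))" by blast
      define U0 where "U0 = \<Union>(F ` K0)"
      have cK0: "card K0 = card U0" using K0 hc[of K0] unfolding U0_def by simp
      have fK0: "finite K0" using K0 fI rev_finite_subset by blast
      have fU0: "finite U0" unfolding U0_def using fK0 K0 fF by blast
      have "\<exists>f. inj_on f K0 \<and> (\<forall>i\<in>K0. f i \<in> F i)"
      proof (rule less.hyps)
        show "card K0 < card I" using K0 fI by (simp add: psubset_card_mono psubsetI)
      qed (use fK0 K0 fF hc in auto)
      then obtain f1 where f1: "inj_on f1 K0" "\<forall>i\<in>K0. f1 i \<in> F i" by blast
      define I2 where "I2 = I - K0"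
      define F2 where "F2 i = F i - U0" for i
      have "\<exists>f. inj_on f I2 \<and> (\<forall>i\<in>I2. f i \<in> F2 i)"
      proof (rule less.hyps)
        have "0 < card K0" using fK0 K0 by (simp add: card_gt_0_iff)
        moreover have "card K0 \<le> card I" using K0 fI by (simp add: card_mono)
        ultimately show "card I2 < card I" unfolding I2_def using K0 fK0 by (simp add: card_Diff_subset)
        show "finite I2" unfolding I2_def using fI by simp
        show "finite (F2 i)" if "i \<in> I2" for i unfolding F2_def using fF that I2_def by simp
        show "card K \<le> card (\<Union>(F2 ` K))" if K: "K \<subseteq> I2" for K
        proof -
          have KK0: "K \<inter> K0 = {}" "K \<union> K0 \<subseteq> I" using K K0 unfolding I2_def by auto
          have fK: "finite K" using K fI unfolding I2_def using rev_finite_subset by blast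
          have U: "\<Union>(F ` (K \<union> K0)) = \<Union>(F2 ` K) \<union> U0" unfolding F2_def U0_def by auto
          have fU2: "finite (\<Union>(F2 ` K))" unfolding F2_def using fK K fF unfolding I2_def by blast
          have "card K + card K0 = card (K \<union> K0)" using KK0 fK fK0 by (simp add: card_Un_disjoint)
          also have "\<dots> \<le> card (\<Union>(F ` (K \<union> K0)))" using hc KK0 by blast
          also have "\<dots> = card (\<Union>(F2 ` K)) + card U0" unfolding U
            by (rule card_Un_disjoint) (use fU2 fU0 in \<open>auto simp: F2_def\<close>)
          finally show ?thesis using cK0 by simp
        qed
      qed
      then obtain f2 where f2: "inj_on f2 I2" "\<forall>i\<in>I2. f2 i \<in> F2 i" by blast
      define f where "f i = (if i \<in> K0 then f1 i else f2 i)" for i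
      have "inj_on f I"
      proof (rule inj_onI)
        fix i j assume ij: "i \<in> I" "j \<in> I" "f i = f j"
        show "i = j"
        proof (cases "i \<in> K0"; cases "j \<in> K0")
          assume "i \<in> K0" "j \<in> K0" then show ?thesis using ij f1 unfolding f_def by (auto dest: inj_onD)
        next
          assume "i \<notin> K0" "j \<notin> K0" then show ?thesis using ij f2 unfolding f_def I2_def by (auto dest: inj_onD)
        next
          assume a: "i \<in> K0" "j \<notin> K0"
          have "f i \<in> U0" using a f1 unfolding f_def U0_def by auto
          moreover have "f j \<notin> U0" using a f2 ij(2) unfolding f_def I2_def F2_def by auto
          ultimately show ?thesis using ij by simp
        next
          assume a: "i \<notin> K0" "j \<in> K0"
          have "f j \<in> U0" using a f1 unfolding f_def U0_def by auto
          moreover have "f i \<notin> U0" using a f2 ij(1) unfolding f_def I2_def F2_def by auto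
          ultimately show ?thesis using ij by simp
        qed
      qed
      moreover have "\<forall>i\<in>I. f i \<in> F i" using f1 f2 unfolding f_def I2_def F2_def by auto
      ultimately show ?thesis by blast
    qed
  qed
qed



theorem lemma2p2:
  fixes p \<alpha> m n :: nat and a b :: "nat \<Rightarrow> 'F::{field,finite}" and S :: "'F set"
  assumes "prime p" and "\<alpha> \<ge> 1" and "card (UNIV :: 'F set) = p ^ \<alpha>"
    and "n \<ge> 1"
    and "inj_on a {1..m}" and "inj_on b {1..n}"
    and "S \<noteq> {}" and "card S < p"
    and "m \<ge> card S + 3" and "m + n - card S - 2 \<le> p"
  shows "\<exists>i j :: nat \<Rightarrow> nat.
           inj_on (\<lambda>k. a (i k) + b (j k)) {1..m - card S - 2} \<and>
           (\<forall>k \<in> {1..m - card S - 2}.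
              i k \<in> {2..card S + 2} \<union> {k + card S + 2} \<and> j k \<in> {1..n} \<and>
              a (i k) - b (j k) \<notin> S \<and>
              a (i k) + b (j k) \<in> restricted_sumset (a ` {1..m}) (b ` {1..n}) S
                                   - {a 1 + b l | l. l \<in> {1..n}})"
proof -
  note pp = assms(1) and injA = assms(5) and injB = assms(6)
  define h where "h = card S"
  define N where "N = m - h - 2"
  define B where "B = b ` {1..n}"
  have ch: "CHAR('F) = p" by (rule charp[OF pp assms(3) assms(2)])
  have fS: "finite S" by simp
  have h1: "1 \<le> h" unfolding h_def using assms(7) fS by (simp add: Suc_le_eq card_gt_0_iff)
  have hp: "h < p" unfolding h_def using assms(8) .
  have mh: "h + 3 \<le> m" unfolding h_def using assms(9) by simp
  have mn: "m + n \<le> p + h + 2" unfolding h_def using assms(10) assms(9) by simp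
  have cB: "card B = n" unfolding B_def using card_image[OF injB] by simp
  have fB: "finite B" unfolding B_def by simp
  have n1: "1 \<le> n" using assms(4) .
  have np: "n < p" using mn mh by simp
  define Fam where "Fam k = {a i + b j | i j. i \<in> {2..h+2} \<union> {k+h+2} \<and> j \<in> {1..n} \<and> a i - b j \<notin> S \<and> a i + b j - a 1 \<notin> B}" for k
  have hallc: "card K \<le> card (\<Union>(Fam ` K))" if K: "K \<subseteq> {1..N}" for K
  proof (cases "K = {}")
    case True then show ?thesis by simp
  next
    case Kne: False
    define J where "J = {2..h+2} \<union> (\<lambda>k. k+h+2) ` K"
    have JM: "J \<subseteq> {2..m}"
    proof
      fix x assume "x \<in> J"
      then consider "x \<in> {2..h+2}" | k where "k \<in> K" "x = k + h + 2" unfolding J_def by blast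
      then show "x \<in> {2..m}"
      proof cases
        case 1 then show ?thesis using mh by auto
      next
        case 2 then have "k \<le> N" using K by auto
        then show ?thesis using 2 mh unfolding N_def by auto
      qed
    qed
    have fK: "finite K" using K finite_subset by blast
    have cJ: "card J = h + 1 + card K"
    proof -
      have "card J = card {2..h+2} + card ((\<lambda>k. k+h+2) ` K)" unfolding J_def
        by (rule card_Un_disjoint) (use fK K in auto)
      also have "card ((\<lambda>k. k+h+2) ` K) = card K" by (rule card_image) (simp add: inj_on_def)
      finally show ?thesis by simp
    qed
    define AJ where "AJ = a ` J"
    have J1: "J \<subseteq> {1..m}" using JM by auto
    have injJ: "inj_on a J" using inj_on_subset[OF injA J1] .
    have cA: "card AJ = h + 1 + card K" unfolding AJ_def using card_image[OF injJ] cJ by simp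
    have fA: "finite AJ" by simp
    have a1: "a 1 \<notin> AJ"
    proof
      assume "a 1 \<in> AJ"
      then obtain i where "i \<in> J" "a 1 = a i" unfolding AJ_def by auto
      moreover have "1 \<in> {1..m}" using mh by simp
      ultimately have "1 = i" using injA J1 by (auto dest: inj_onD)
      then show False using \<open>i \<in> J\<close> JM by auto
    qed
    have U: "\<Union>(Fam ` K) = {x + y | x y. x \<in> AJ \<and> y \<in> B \<and> x - y \<notin> S \<and> x + y - a 1 \<notin> B}"
    proof
      show "\<Union>(Fam ` K) \<subseteq> {x + y | x y. x \<in> AJ \<and> y \<in> B \<and> x - y \<notin> S \<and> x + y - a 1 \<notin> B}"
      proof
        fix z assume "z \<in> \<Union>(Fam ` K)"
        then obtain k where k: "k \<in> K" "z \<in> Fam k" by blast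
        then obtain i j where ij: "z = a i + b j" "i \<in> {2..h+2} \<union> {k+h+2}" "j \<in> {1..n}" "a i - b j \<notin> S" "a i + b j - a 1 \<notin> B"
          unfolding Fam_def mem_Collect_eq by blast
        have "i \<in> J" using ij(2) k(1) unfolding J_def by auto
        then have "a i \<in> AJ" unfolding AJ_def by simp
        moreover have "b j \<in> B" using ij(3) unfolding B_def by simp
        ultimately show "z \<in> {x + y | x y. x \<in> AJ \<and> y \<in> B \<and> x - y \<notin> S \<and> x + y - a 1 \<notin> B}"
          using ij by blast
      qed
    next
      show "{x + y | x y. x \<in> AJ \<and> y \<in> B \<and> x - y \<notin> S \<and> x + y - a 1 \<notin> B} \<subseteq> \<Union>(Fam ` K)"
      proof
        fix z assume "z \<in> {x + y | x y. x \<in> AJ \<and> y \<in> B \<and> x - y \<notin> S \<and> x + y - a 1 \<notin> B}"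
        then obtain i j where z: "z = a i + b j" "i \<in> J" "j \<in> {1..n}" "a i - b j \<notin> S" "a i + b j - a 1 \<notin> B"
          unfolding AJ_def B_def by blast
        obtain k where k: "k \<in> K" "i \<in> {2..h+2} \<union> {k+h+2}"
          using z(2) Kne unfolding J_def by blast
        then have "z \<in> Fam k" unfolding Fam_def using z by blast
        then show "z \<in> \<Union>(Fam ` K)" using k by blast
      qed
    qed
    have "h + 1 + card K - h - 1 \<le> card {x + y | x y. x \<in> AJ \<and> y \<in> B \<and> x - y \<notin> S \<and> x + y - a 1 \<notin> B}"
    proof (rule KT[OF ch pp fA fB fS a1 h_def[symmetric] h1 hp cA _ cB n1 np])
      have "card K \<noteq> 0" using fK Kne by simp
      then show "h + 2 \<le> h + 1 + card K" by simp
      have "card K \<le> N" using card_mono[OF _ K] by simp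
      then show "h + 1 + card K + n \<le> p + h + 1" using mn mh unfolding N_def by simp
    qed
    then show ?thesis unfolding U by simp
  qed
  have "\<exists>f. inj_on f {1..N} \<and> (\<forall>k\<in>{1..N}. f k \<in> Fam k)"
  proof (rule hall)
    show "finite (Fam k)" for k by simp
  qed (use hallc in auto)
  then obtain f where f: "inj_on f {1..N}" "\<forall>k\<in>{1..N}. f k \<in> Fam k" by blast
  have ex: "\<forall>k\<in>{1..N}. \<exists>ij. f k = a (fst ij) + b (snd ij) \<and> fst ij \<in> {2..h+2} \<union> {k+h+2} \<and> snd ij \<in> {1..n}
          \<and> a (fst ij) - b (snd ij) \<notin> S \<and> a (fst ij) + b (snd ij) - a 1 \<notin> B"
  proof
    fix k assume "k \<in> {1..N}"
    then have "f k \<in> Fam k" using f by blast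
    then obtain i j where "f k = a i + b j" "i \<in> {2..h+2} \<union> {k+h+2}" "j \<in> {1..n}" "a i - b j \<notin> S" "a i + b j - a 1 \<notin> B"
      unfolding Fam_def mem_Collect_eq by blast
    then show "\<exists>ij. f k = a (fst ij) + b (snd ij) \<and> fst ij \<in> {2..h+2} \<union> {k+h+2} \<and> snd ij \<in> {1..n}
          \<and> a (fst ij) - b (snd ij) \<notin> S \<and> a (fst ij) + b (snd ij) - a 1 \<notin> B"
      by (intro exI[of _ "(i, j)"]) simp
  qed
  from bchoice[OF ex] obtain g where g: "\<forall>k\<in>{1..N}. f k = a (fst (g k)) + b (snd (g k)) \<and> fst (g k) \<in> {2..h+2} \<union> {k+h+2} \<and> snd (g k) \<in> {1..n}
          \<and> a (fst (g k)) - b (snd (g k)) \<notin> S \<and> a (fst (g k)) + b (snd (g k)) - a 1 \<notin> B"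
    by blast
  define i where "i k = fst (g k)" for k
  define j where "j k = snd (g k)" for k
  have inj: "inj_on (\<lambda>k. a (i k) + b (j k)) {1..N}"
  proof -
    have "\<forall>k\<in>{1..N}. a (i k) + b (j k) = f k" using g unfolding i_def j_def by simp
    then show ?thesis using f(1) inj_on_cong[of "{1..N}" "\<lambda>k. a (i k) + b (j k)" f] by simp
  qed
  have props: "i k \<in> {2..h + 2} \<union> {k + h + 2} \<and> j k \<in> {1..n} \<and>
              a (i k) - b (j k) \<notin> S \<and>
              a (i k) + b (j k) \<in> restricted_sumset (a ` {1..m}) (b ` {1..n}) S
                                   - {a 1 + b l | l. l \<in> {1..n}}" if k: "k \<in> {1..N}" for k
  proof -
    have gk: "i k \<in> {2..h+2} \<union> {k+h+2}" "j k \<in> {1..n}" "a (i k) - b (j k) \<notin> S" "a (i k) + b (j k) - a 1 \<notin> B"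
      using g k unfolding i_def j_def by auto
    have im: "i k \<in> {1..m}" using gk(1) k mh unfolding N_def by auto
    have "a (i k) + b (j k) \<in> restricted_sumset (a ` {1..m}) (b ` {1..n}) S"
      unfolding restricted_sumset_def using im gk(2,3) by blast
    moreover have "a (i k) + b (j k) \<notin> {a 1 + b l | l. l \<in> {1..n}}"
    proof
      assume "a (i k) + b (j k) \<in> {a 1 + b l | l. l \<in> {1..n}}"
      then obtain l where "l \<in> {1..n}" "a (i k) + b (j k) = a 1 + b l" by blast
      then have "a (i k) + b (j k) - a 1 \<in> B" unfolding B_def by (simp add: algebra_simps)
      then show False using gk(4) by simp
    qed
    ultimately show ?thesis using gk by blast
  qed
  show ?thesis
    by (rule exI[of _ i], rule exI[of _ j]) (use inj props in \<open>simp add: N_def h_def\<close>)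
qed


end
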